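(* Let $\mathcal{P} \subseteq \{2,3,4,\dots\}$ be nonempty, let $\varrho$ be the minimal element of $\mathcal{P}$, and let $s \geq 0$ be real with $s>\sigma_\mathcal{P}$. Then for all integers $n\geq 2$ and $k \geq 1$, $$H_k(n,\mathcal{P}) \leq \frac{\zeta_\mathcal{P}(s)^{k-1}\, n^s}{\varrho^s}.$$
   Context: For $\mathcal{P} \subseteq \{2,3,\dots\}$ and $k\ge1$, $H_k(n,\mathcal{P})$ is the number of ordered $k$-tuples $(d_1,\dots,d_k)$ with $d_1\cdots d_k = n$ and every $d_i \in \mathcal{P}$ (so $H_1(n,\mathcal{P})=1$ if $n\in\mathcal{P}$ and $0$ otherwise). $\zeta_\mathcal{P}(s)=\sum_{m\in\mathcal{P}} m^{-s}$, and $\sigma_\mathcal{P}$ is its abscissa of convergence ($-\infty$ if $\mathcal{P}$ is finite). *)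

theory Defs
  imports "HOL-Analysis.Analysis" "HOL-Library.Extended_Real"
begin

definition H :: "nat \<Rightarrow> nat \<Rightarrow> nat set \<Rightarrow> nat" where
  "H k n P = card {ds :: nat list. length ds = k \<and> prod_list ds = n \<and> set ds \<subseteq> P}"

definition zetaP :: "nat set \<Rightarrow> real \<Rightarrow> real" where
  "zetaP P s = (\<Sum>\<^sub>\<infinity>m\<in>P. real m powr (-s))"

text \<open>Abscissa of convergence (as an extended real; -\<infinity> if P is finite).\<close>
definition sigmaP :: "nat set \<Rightarrow> ereal" where
  "sigmaP P = Inf (ereal ` {s::real. (\<lambda>m. real m powr (-s)) summable_on P})"

end

theory Submission
  imports Defs
begin

lemma summ_s:
  fixes P :: "nat set" and s :: real
  assumes "P \<subseteq> {2..}" and "ereal s > sigmaP P"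
  shows "(\<lambda>m. real m powr (-s)) summable_on P"
proof -
  from assms(2) obtain t where t: "(\<lambda>m. real m powr (-t)) summable_on P" "ereal t < ereal s"
    unfolding sigmaP_def Inf_less_iff by auto
  show ?thesis
  proof (rule summable_on_comparison_test[OF t(1)])
    fix x assume "x \<in> P"
    hence "real x \<ge> 1" using assms(1) by auto
    thus "real x powr (-s) \<le> real x powr (-t)" using t(2) by (intro powr_mono) auto
  qed auto
qed

lemma H_zero_div:
  assumes "P \<subseteq> {2..}"
  shows "{ds :: nat list. length ds = Suc k \<and> prod_list ds = n \<and> set ds \<subseteq> P}
     = (\<Union>d\<in>{d\<in>P. d dvd n}. (\<lambda>ds. d # ds) ` {ds. length ds = k \<and> prod_list ds = n div d \<and> set ds \<subseteq> P})"
proof (intro set_eqI iffI)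
  fix x assume "x \<in> {ds :: nat list. length ds = Suc k \<and> prod_list ds = n \<and> set ds \<subseteq> P}"
  then obtain d ds where x: "x = d # ds" "length ds = k" "d * prod_list ds = n" "d \<in> P" "set ds \<subseteq> P"
    by (cases x) auto
  have "d > 0" using x(4) assms by auto
  then have pd: "prod_list ds = n div d" using x(3) by auto
  have "d dvd n" by (rule dvdI[OF x(3)[symmetric]])
  show "x \<in> (\<Union>d\<in>{d\<in>P. d dvd n}. (\<lambda>ds. d # ds) ` {ds. length ds = k \<and> prod_list ds = n div d \<and> set ds \<subseteq> P})"
    proof (rule UN_I[of d])
    show "d \<in> {d\<in>P. d dvd n}" using x(4) \<open>d dvd n\<close> by simp
    show "x \<in> (\<lambda>ds. d # ds) ` {ds. length ds = k \<and> prod_list ds = n div d \<and> set ds \<subseteq> P}"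
      unfolding x(1) using x(2,5) pd by (intro imageI) simp
  qed
next
  fix x assume "x \<in> (\<Union>d\<in>{d\<in>P. d dvd n}. (\<lambda>ds. d # ds) ` {ds. length ds = k \<and> prod_list ds = n div d \<and> set ds \<subseteq> P})"
  then obtain d ds where x: "x = d # ds" "length ds = k" "prod_list ds = n div d" "d \<in> P" "set ds \<subseteq> P" "d dvd n"
    by auto
  then show "x \<in> {ds :: nat list. length ds = Suc k \<and> prod_list ds = n \<and> set ds \<subseteq> P}"
    by auto
qed

lemma main:
  fixes P :: "nat set" and s :: real
  assumes P2: "P \<subseteq> {2..}" and Pne: "P \<noteq> {}"
    and s0: "s \<ge> 0" and summ: "(\<lambda>m. real m powr (-s)) summable_on P"
  shows "n \<ge> 1 \<Longrightarrow> real (H (Suc k) n P) \<le> zetaP P s ^ k * real n powr s / real (LEAST m. m \<in> P) powr s"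
proof (induction k arbitrary: n)
  define r where "r = (LEAST m. m \<in> P)"
  have rP: "r \<in> P" unfolding r_def using Pne by (metis LeastI ex_in_conv)
  have rpos: "real r > 0" using rP P2 by force
  case 0
  show ?case
  proof (cases "n \<in> P")
    case True
    have "{ds :: nat list. length ds = 1 \<and> prod_list ds = n \<and> set ds \<subseteq> P} = {[n]}"
      using True by (auto simp: length_Suc_conv)
    hence H1: "H 1 n P = 1" unfolding H_def by simp
    have "r \<le> n" unfolding r_def using True by (rule Least_le)
    hence "real r powr s \<le> real n powr s" using rpos s0 by (intro powr_mono2) auto
    moreover have "H (Suc 0) n P = 1" using H1 by simp
    ultimately show ?thesis using rpos unfolding r_def[symmetric] power_0 by simp
  next
    case False
    have "{ds :: nat list. length ds = 1 \<and> prod_list ds = n \<and> set ds \<subseteq> P} = {}"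
      using False by (auto simp: length_Suc_conv)
    note E = this
    have H1: "H 1 n P = 0" by (simp only: H_def E card.empty)
    have "0 \<le> real n powr s / real r powr s" by (rule divide_nonneg_nonneg; rule powr_ge_zero)
    moreover have "H (Suc 0) n P = 0" using H1 by simp
    ultimately show ?thesis unfolding r_def[symmetric] power_0 by simp
  qed
next
  define r where "r = (LEAST m. m \<in> P)"
  have rP: "r \<in> P" unfolding r_def using Pne by (metis LeastI ex_in_conv)
  have rpos: "real r > 0" using rP P2 by force
  define Z where "Z = zetaP P s"
  case (Suc k)
  define D where "D = {d\<in>P. d dvd n}"
  have "D \<subseteq> {d. d dvd n}" unfolding D_def by blast
  moreover have "finite {d. d dvd n}" using Suc.prems by (intro finite_divisors_nat) linarith
  ultimately have finD: "finite D" by (rule finite_subset)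
  have Dpos: "\<And>d. d \<in> D \<Longrightarrow> d > 0" using P2 unfolding D_def by force
  have "H (Suc (Suc k)) n P = card (\<Union>d\<in>D. (\<lambda>ds. d # ds) ` {ds. length ds = Suc k \<and> prod_list ds = n div d \<and> set ds \<subseteq> P})"
    unfolding H_def D_def by (subst H_zero_div[OF P2]) simp
  also have "\<dots> \<le> (\<Sum>d\<in>D. card ((\<lambda>ds. d # ds) ` {ds. length ds = Suc k \<and> prod_list ds = n div d \<and> set ds \<subseteq> P}))"
    by (rule card_UN_le[OF finD])
  also have "\<dots> = (\<Sum>d\<in>D. H (Suc k) (n div d) P)"
    unfolding H_def by (intro sum.cong refl card_image) (auto simp: inj_on_def)
  finally have "real (H (Suc (Suc k)) n P) \<le> (\<Sum>d\<in>D. real (H (Suc k) (n div d) P))"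
    by (metis of_nat_le_iff of_nat_sum)
  also have "\<dots> \<le> (\<Sum>d\<in>D. Z ^ k * real (n div d) powr s / real r powr s)"
  proof (intro sum_mono)
    fix d assume "d \<in> D"
    hence dn: "d dvd n" and d0: "d > 0" using Dpos unfolding D_def by auto
    have "d \<le> n" using dn Suc.prems by (intro dvd_imp_le) auto
    hence "0 < n div d" using d0 div_greater_zero_iff[of n d] by blast
    hence "n div d \<ge> 1" by linarith
    thus "real (H (Suc k) (n div d) P) \<le> Z ^ k * real (n div d) powr s / real r powr s"
      using Suc.IH unfolding Z_def r_def by blast
  qed
  also have "\<dots> = (\<Sum>d\<in>D. Z ^ k * real n powr s / real r powr s * real d powr (-s))"
  proof (intro sum.cong refl)
    fix d assume d: "d \<in> D"
    have "real (n div d) = real n / real d" using d unfolding D_def by (simp add: real_of_nat_div)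
    moreover have "real d > 0" using Dpos d by simp
    ultimately show "Z ^ k * real (n div d) powr s / real r powr s = Z ^ k * real n powr s / real r powr s * real d powr (-s)"
      by (simp add: powr_divide powr_minus_divide)
  qed
  also have "\<dots> = Z ^ k * real n powr s / real r powr s * (\<Sum>d\<in>D. real d powr (-s))"
    by (simp add: sum_distrib_left)
  also have "\<dots> \<le> Z ^ k * real n powr s / real r powr s * Z"
  proof (intro mult_left_mono)
    show "(\<Sum>d\<in>D. real d powr (-s)) \<le> Z" unfolding Z_def zetaP_def
      by (rule finite_sum_le_infsum[OF summ finD]) (auto simp: D_def)
    have "Z \<ge> 0" unfolding Z_def zetaP_def by (rule infsum_nonneg) auto
    thus "0 \<le> Z ^ k * real n powr s / real r powr s" by simp
  qed
  also have "\<dots> = Z ^ Suc k * real n powr s / real r powr s"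
    by (simp only: power_Suc2 times_divide_eq_left times_divide_eq_right mult_ac)
  finally show ?case unfolding Z_def r_def .
qed

theorem lemma2p2:
  fixes P :: "nat set" and s :: real and n k :: nat
  assumes "P \<subseteq> {2..}" and "P \<noteq> {}"
    and "s \<ge> 0" and "ereal s > sigmaP P"
    and "n \<ge> 2" and "k \<ge> 1"
  shows "real (H k n P) \<le> zetaP P s ^ (k - 1) * real n powr s / real (LEAST m. m \<in> P) powr s"
proof -
  obtain j where k: "k = Suc j" using assms(6) by (cases k) auto
  show ?thesis unfolding k using main[OF assms(1-3) summ_s[OF assms(1,4)], of n j] assms(5) by simp
qed

end
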